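(* (i) Let $N,P$ be positive integers and let $a\in\{1,\ldots,2P-1\}$, $\phi_0,\phi_1\in\{1,\ldots,2N-1\}$ with $\phi_0+\phi_1<2N$. Take $\boldsymbol a=(a,\ldots,a)$, $\boldsymbol\phi_0=(\phi_0,\ldots,\phi_0)$, $\boldsymbol\phi_1=(\phi_1,\ldots,\phi_1)$, and put $\overline a=a/(2P)$, $f_0=\phi_0/(2N)$, $f_1=\phi_1/(2N)$. Then $|\mathscr A_1|>|\mathscr A_2|$ if and only if $$\frac{1}{2P}\log\binom{2P}{2P\overline a}-\frac{1}{2N}\left[\log\binom{2N}{2N(f_0+f_1)}+\log\binom{2N(f_0+f_1)}{2Nf_1}\right]+(f_0+f_1)>0.$$ (ii) Suppose $a=a(N,P)$, $\phi_0=\phi_0(N,P)$, $\phi_1=\phi_1(N,P)$ are as in (i) for each $N,P$, and that the limits $\overline a^{\infty}=\lim\overline a$, $f_0^\infty=\lim f_0$, $f_1^\infty=\lim f_1$ as $N,P\to\infty$ exist, with $\overline a^\infty,f_0^\infty,f_1^\infty,f_0^\infty+f_1^\infty\in(0,1)$. Let $\Lambda=H(\overline a^\infty,1-\overline a^\infty)-H(f_0^\infty,f_1^\infty,1-f_0^\infty-f_1^\infty)+(f_0^\infty+f_1^\infty)$. If $\Lambda>0$ then $|\mathscr A_1|>|\mathscr A_2|$ for all sufficiently large $N$ and $P$; if $\Lambda<0$ then $|\mathscr A_1|\le|\mathscr A_2|$ for all sufficiently large $N$ and $P$.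
   Context: Let $N,P$ be positive integers. An admixed array is a pair $[\mathbf A,\mathbf X]$ of matrices $\mathbf A=(A_{nj}),\mathbf X=(X_{nj})\in\{0,1\}^{N\times 2P}$; for $p\in[P]$, columns $p$ and $P+p$ form the $p$th locus. The row local ancestry tally of row $n$ is $A_{n\cdot}=\sum_{j=1}^{2P}A_{nj}$. The ancestry-specific allele dosages of locus $p$ are $\Phi_{p,0}=\sum_{n=1}^N[(1-A_{np})X_{np}+(1-A_{n(P+p)})X_{n(P+p)}]$ and $\Phi_{p,1}=\sum_{n=1}^N[A_{np}X_{np}+A_{n(P+p)}X_{n(P+p)}]$. $\mathscr A_1=\mathscr A_1(N,P;\boldsymbol a)$ is the set of admixed arrays with $A_{n\cdot}=a_{n\cdot}$ for all $n$; $\mathscr A_2=\mathscr A_2(N,P;\boldsymbol\phi_0,\boldsymbol\phi_1)$ is the set of admixed arrays with $\Phi_{p,0}=\phi_{p,0}$, $\Phi_{p,1}=\phi_{p,1}$ for all $p$. $\log$ is base 2, and $H(z_1,\ldots,z_I)=\sum_i z_i\log(1/z_i)$ for a probability vector $(z_1,\ldots,z_I)$. *)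

theory Defs
  imports "HOL-Analysis.Analysis"
begin

text \<open>Matrices in {0,1}^(N x 2P) are represented as functions nat => nat => nat,
  0-indexed (rows n < N, columns j < 2P), with entries in {0,1} inside the index
  range and 0 outside of it (so that the representation is unique).
  Locus p < P consists of columns p and P + p.\<close>

definition admixed_arrays :: "nat \<Rightarrow> nat \<Rightarrow> ((nat \<Rightarrow> nat \<Rightarrow> nat) \<times> (nat \<Rightarrow> nat \<Rightarrow> nat)) set" where
  "admixed_arrays N P = {(A, X).
     \<forall>n j. (n < N \<and> j < 2 * P \<longrightarrow> A n j \<le> 1 \<and> X n j \<le> 1) \<and>
           (\<not> (n < N \<and> j < 2 * P) \<longrightarrow> A n j = 0 \<and> X n j = 0)}"

definition row_tally :: "nat \<Rightarrow> (nat \<Rightarrow> nat \<Rightarrow> nat) \<Rightarrow> nat \<Rightarrow> nat" where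
  "row_tally P A n = (\<Sum>j<2 * P. A n j)"

definition Phi0 :: "nat \<Rightarrow> nat \<Rightarrow> (nat \<Rightarrow> nat \<Rightarrow> nat) \<Rightarrow> (nat \<Rightarrow> nat \<Rightarrow> nat) \<Rightarrow> nat \<Rightarrow> nat" where
  "Phi0 N P A X p = (\<Sum>n<N. (1 - A n p) * X n p + (1 - A n (P + p)) * X n (P + p))"

definition Phi1 :: "nat \<Rightarrow> nat \<Rightarrow> (nat \<Rightarrow> nat \<Rightarrow> nat) \<Rightarrow> (nat \<Rightarrow> nat \<Rightarrow> nat) \<Rightarrow> nat \<Rightarrow> nat" where
  "Phi1 N P A X p = (\<Sum>n<N. A n p * X n p + A n (P + p) * X n (P + p))"

definition A1 :: "nat \<Rightarrow> nat \<Rightarrow> (nat \<Rightarrow> nat) \<Rightarrow> ((nat \<Rightarrow> nat \<Rightarrow> nat) \<times> (nat \<Rightarrow> nat \<Rightarrow> nat)) set" where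
  "A1 N P a = {(A, X) \<in> admixed_arrays N P. \<forall>n<N. row_tally P A n = a n}"

definition A2 :: "nat \<Rightarrow> nat \<Rightarrow> (nat \<Rightarrow> nat) \<Rightarrow> (nat \<Rightarrow> nat) \<Rightarrow> ((nat \<Rightarrow> nat \<Rightarrow> nat) \<times> (nat \<Rightarrow> nat \<Rightarrow> nat)) set" where
  "A2 N P phi0 phi1 = {(A, X) \<in> admixed_arrays N P.
      \<forall>p<P. Phi0 N P A X p = phi0 p \<and> Phi1 N P A X p = phi1 p}"

definition H :: "real list \<Rightarrow> real" where
  "H zs = (\<Sum>z\<leftarrow>zs. z * log 2 (1 / z))"

end

theory Submission
  imports Defs "HOL-Real_Asymp.Real_Asymp"
begin


lemma card_decomp:
  fixes Loc :: "'k \<Rightarrow> 'a set"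
  assumes K: "finite K" and fin: "\<And>p. p \<in> K \<Longrightarrow> finite (Loc p)"
    and dj: "disjoint_family_on Loc K"
  shows "card {(u,v). u \<subseteq> \<Union>(Loc ` K) \<and> v \<subseteq> \<Union>(Loc ` K) \<and> (\<forall>p\<in>K. Q p (u \<inter> Loc p) (v \<inter> Loc p))}
       = (\<Prod>p\<in>K. card {(u,v). u \<subseteq> Loc p \<and> v \<subseteq> Loc p \<and> Q p u v})"
proof -
  let ?L = "{(u,v). u \<subseteq> \<Union>(Loc ` K) \<and> v \<subseteq> \<Union>(Loc ` K) \<and> (\<forall>p\<in>K. Q p (u \<inter> Loc p) (v \<inter> Loc p))}"
  let ?S = "\<lambda>p. {(u,v). u \<subseteq> Loc p \<and> v \<subseteq> Loc p \<and> Q p u v}"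
  let ?f = "\<lambda>(u,v). \<lambda>p\<in>K. (u \<inter> Loc p, v \<inter> Loc p)"
  let ?g = "\<lambda>h. (\<Union>p\<in>K. fst (h p), \<Union>p\<in>K. snd (h p))"
  have key: "(\<Union>q\<in>K. F q) \<inter> Loc p = F p" if "p \<in> K" "\<And>q. q \<in> K \<Longrightarrow> F q \<subseteq> Loc q" for F p
  proof -
    have "F q \<inter> Loc p = {}" if "q \<in> K" "q \<noteq> p" for q
      using dj \<open>p \<in> K\<close> that \<open>\<And>q. q \<in> K \<Longrightarrow> F q \<subseteq> Loc q\<close>
      unfolding disjoint_family_on_def by blast
    then show ?thesis using that by blast
  qed
  have "bij_betw ?f ?L (Pi\<^sub>E K ?S)"
  proof (rule bij_betw_byWitness[where f'="?g"])
    show "\<forall>a\<in>?L. ?g (?f a) = a" by auto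
    show "\<forall>a'\<in>Pi\<^sub>E K ?S. ?f (?g a') = a'"
    proof
      fix h assume h: "h \<in> Pi\<^sub>E K ?S"
      show "?f (?g h) = h"
      proof
        fix p show "?f (?g h) p = h p"
        proof (cases "p \<in> K")
          case True
          have 1: "(\<Union>q\<in>K. fst (h q)) \<inter> Loc p = fst (h p)"
            by (rule key[OF True]) (use h in \<open>auto simp: PiE_def Pi_def case_prod_beta\<close>)
          have 2: "(\<Union>q\<in>K. snd (h q)) \<inter> Loc p = snd (h p)"
            by (rule key[OF True]) (use h in \<open>auto simp: PiE_def Pi_def case_prod_beta\<close>)
          show ?thesis using True 1 2 by simp
        next
          case False then show ?thesis using h by (auto simp: PiE_def extensional_def)
        qed
      qed
    qed
    show "?f ` ?L \<subseteq> Pi\<^sub>E K ?S" by auto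
    show "?g ` Pi\<^sub>E K ?S \<subseteq> ?L"
    proof
      fix x assume "x \<in> ?g ` Pi\<^sub>E K ?S"
      then obtain h where h: "h \<in> Pi\<^sub>E K ?S" and x: "x = ?g h" by blast
      have sub: "\<And>q. q \<in> K \<Longrightarrow> fst (h q) \<subseteq> Loc q" "\<And>q. q \<in> K \<Longrightarrow> snd (h q) \<subseteq> Loc q"
        "\<And>q. q \<in> K \<Longrightarrow> Q q (fst (h q)) (snd (h q))"
        using h by (auto simp: PiE_def Pi_def case_prod_beta)
      show "x \<in> ?L" unfolding x using sub key[of _ "\<lambda>q. fst (h q)"] key[of _ "\<lambda>q. snd (h q)"]
        by (auto; blast)
    qed
  qed
  then have "card ?L = card (Pi\<^sub>E K ?S)" by (rule bij_betw_same_card)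
  also have "\<dots> = (\<Prod>p\<in>K. card (?S p))" using K by (rule card_PiE)
  finally show ?thesis .
qed

lemma count_locus:
  assumes L: "finite L" "card L = m" and k: "k0 + k1 \<le> m"
  shows "card {(u,v). u \<subseteq> L \<and> v \<subseteq> L \<and> card (v - u) = k0 \<and> card (v \<inter> u) = k1}
     = (m choose (k0+k1)) * ((k0+k1) choose k1) * 2^(m - (k0+k1))"
proof -
  let ?s = "k0 + k1"
  let ?LHS = "{(u,v). u \<subseteq> L \<and> v \<subseteq> L \<and> card (v - u) = k0 \<and> card (v \<inter> u) = k1}"
  let ?T = "{T. T \<subseteq> L \<and> card T = ?s}"
  let ?B = "\<lambda>T. {U. U \<subseteq> T \<and> card U = k1} \<times> Pow (L - T)"
  let ?f = "\<lambda>(u,v). (v, (v \<inter> u, u - v))"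
  let ?g = "\<lambda>(T,(U,W)). (U \<union> W, T)"
  have "bij_betw ?f ?LHS (Sigma ?T ?B)"
  proof (rule bij_betw_byWitness[where f'="?g"])
    show "\<forall>a\<in>?LHS. ?g (?f a) = a" by auto
    show "\<forall>a'\<in>Sigma ?T ?B. ?f (?g a') = a'" by auto
    show "?f ` ?LHS \<subseteq> Sigma ?T ?B"
    proof
      fix x assume "x \<in> ?f ` ?LHS"
      then obtain u v where a: "u \<subseteq> L" "v \<subseteq> L" "card (v - u) = k0" "card (v \<inter> u) = k1"
        and x: "x = ?f (u,v)" by blast
      have "finite v" using a L finite_subset by blast
      have "card v = card (v - u) + card (v \<inter> u)"
        using card_Un_disjoint[of "v - u" "v \<inter> u"] \<open>finite v\<close>
        by (metis Diff_disjoint Int_Diff Un_Diff_Int finite_Diff finite_Int inf_commute)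
      then show "x \<in> Sigma ?T ?B" using a x by auto
    qed
    show "?g ` Sigma ?T ?B \<subseteq> ?LHS"
    proof
      fix x assume "x \<in> ?g ` Sigma ?T ?B"
      then obtain T U W where a: "T \<subseteq> L" "card T = ?s" "U \<subseteq> T" "card U = k1" "W \<subseteq> L - T"
        and x: "x = ?g (T,(U,W))" by blast
      have "finite T" using a L finite_subset by blast
      have e1: "T - (U \<union> W) = T - U" "T \<inter> (U \<union> W) = U" using a by auto
      have "card (T - U) = k0" using a \<open>finite T\<close> by (simp add: card_Diff_subset finite_subset)
      then show "x \<in> ?LHS" using a x e1 by auto
    qed
  qed
  then have "card ?LHS = card (Sigma ?T ?B)" by (rule bij_betw_same_card)
  also have "\<dots> = (\<Sum>T\<in>?T. card (?B T))"
    proof (rule card_SigmaI)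
    show "finite ?T" using L by simp
    show "\<forall>a\<in>?T. finite (?B a)"
    proof
      fix T assume "T \<in> ?T"
      then have "{U. U \<subseteq> T \<and> card U = k1} \<subseteq> Pow L" by auto
      then show "finite (?B T)" using L by (auto intro!: finite_cartesian_product intro: finite_subset)
    qed
  qed
  also have "\<dots> = (\<Sum>T\<in>?T. (?s choose k1) * 2^(m - ?s))"
  proof (rule sum.cong)
    fix T assume "T \<in> ?T"
    then have T: "T \<subseteq> L" "card T = ?s" by auto
    then have "finite T" using L finite_subset by blast
    have "card (L - T) = m - ?s" using T L by (simp add: card_Diff_subset \<open>finite T\<close>)
    then show "card (?B T) = (?s choose k1) * 2^(m - ?s)"
      using n_subsets[OF \<open>finite T\<close>, of k1] T L
      by (simp add: card_cartesian_product card_Pow)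
  qed simp
  also have "\<dots> = (m choose ?s) * (?s choose k1) * 2^(m - ?s)"
    using n_subsets[OF L(1), of ?s] L by simp
  finally show ?thesis .
qed



definition ind :: "(nat \<times> nat) set \<Rightarrow> nat \<Rightarrow> nat \<Rightarrow> nat" where
  "ind S n j = (if (n,j) \<in> S then 1 else 0)"

lemma ind_inj: "ind u = ind v \<Longrightarrow> u = v"
  unfolding ind_def by (auto simp: fun_eq_iff split: if_splits; metis zero_neq_one)

lemma admixed_repr:
  assumes "(A, X) \<in> admixed_arrays N P"
  shows "A = ind {c. A (fst c) (snd c) = 1}" "X = ind {c. X (fst c) (snd c) = 1}"
    "{c. A (fst c) (snd c) = 1} \<subseteq> {..<N} \<times> {..<2*P}"
    "{c. X (fst c) (snd c) = 1} \<subseteq> {..<N} \<times> {..<2*P}"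
proof -
  have h: "\<And>n j. (n < N \<and> j < 2 * P \<longrightarrow> A n j \<le> 1 \<and> X n j \<le> 1) \<and>
           (\<not> (n < N \<and> j < 2 * P) \<longrightarrow> A n j = 0 \<and> X n j = 0)"
    using assms unfolding admixed_arrays_def by auto
  show "A = ind {c. A (fst c) (snd c) = 1}"
  proof (intro ext)
    fix n j show "A n j = ind {c. A (fst c) (snd c) = 1} n j"
      using h[of n j] unfolding ind_def by (cases "A n j") auto
  qed
  show "X = ind {c. X (fst c) (snd c) = 1}"
  proof (intro ext)
    fix n j show "X n j = ind {c. X (fst c) (snd c) = 1} n j"
      using h[of n j] unfolding ind_def by (cases "X n j") auto
  qed
  show "{c. A (fst c) (snd c) = 1} \<subseteq> {..<N} \<times> {..<2*P}"
  proof
    fix c assume "c \<in> {c. A (fst c) (snd c) = 1}"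
    then show "c \<in> {..<N} \<times> {..<2*P}" using h[of "fst c" "snd c"] by (cases c) auto
  qed
  show "{c. X (fst c) (snd c) = 1} \<subseteq> {..<N} \<times> {..<2*P}"
  proof
    fix c assume "c \<in> {c. X (fst c) (snd c) = 1}"
    then show "c \<in> {..<N} \<times> {..<2*P}" using h[of "fst c" "snd c"] by (cases c) auto
  qed
qed

lemma ind_admixed:
  "u \<subseteq> {..<N} \<times> {..<2*P} \<Longrightarrow> v \<subseteq> {..<N} \<times> {..<2*P} \<Longrightarrow> (ind u, ind v) \<in> admixed_arrays N P"
  unfolding admixed_arrays_def ind_def by auto

lemma sum_ind_row: "(\<Sum>j\<in>B. ind S n j) = card (S \<inter> ({n} \<times> B))" if "finite B"
proof -
  have "(\<Sum>j\<in>B. ind S n j) = card {j\<in>B. (n,j) \<in> S}"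
    using that by (simp add: ind_def sum.If_cases Int_def)
  also have "\<dots> = card ((\<lambda>j. (n,j)) ` {j\<in>B. (n,j) \<in> S})"
    by (rule card_image[symmetric]) (auto simp: inj_on_def)
  also have "(\<lambda>j. (n,j)) ` {j\<in>B. (n,j) \<in> S} = S \<inter> ({n} \<times> B)" by auto
  finally show ?thesis .
qed

lemma sum_ind_col: "(\<Sum>n\<in>B. ind S n p) = card (S \<inter> (B \<times> {p}))" if "finite B"
proof -
  have "(\<Sum>n\<in>B. ind S n p) = card {n\<in>B. (n,p) \<in> S}"
    using that by (simp add: ind_def sum.If_cases Int_def)
  also have "\<dots> = card ((\<lambda>n. (n,p)) ` {n\<in>B. (n,p) \<in> S})"
    by (rule card_image[symmetric]) (auto simp: inj_on_def)
  also have "(\<lambda>n. (n,p)) ` {n\<in>B. (n,p) \<in> S} = S \<inter> (B \<times> {p})" by auto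
  finally show ?thesis .
qed

lemma row_tally_ind: "row_tally P (ind u) n = card (u \<inter> ({n} \<times> {..<2*P}))"
  unfolding row_tally_def by (simp add: sum_ind_row)

lemma sum_two_cols:
  assumes "p \<noteq> q"
  shows "(\<Sum>n<N. ind S n p + ind S n q) = card (S \<inter> ({..<N} \<times> {p, q}))"
proof -
  have "(\<Sum>n<N. ind S n p + ind S n q) = card (S \<inter> ({..<N} \<times> {p})) + card (S \<inter> ({..<N} \<times> {q}))"
    by (simp add: sum.distrib sum_ind_col)
  also have "\<dots> = card (S \<inter> ({..<N} \<times> {p}) \<union> S \<inter> ({..<N} \<times> {q}))"
    by (rule card_Un_disjoint[symmetric]) (use assms in \<open>auto intro: finite_subset\<close>)
  also have "S \<inter> ({..<N} \<times> {p}) \<union> S \<inter> ({..<N} \<times> {q}) = S \<inter> ({..<N} \<times> {p, q})" by auto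
  finally show ?thesis .
qed

lemma Phi0_ind:
  assumes "p < P"
  shows "Phi0 N P (ind u) (ind v) p = card ((v - u) \<inter> ({..<N} \<times> {p, P+p}))"
proof -
  have "Phi0 N P (ind u) (ind v) p = (\<Sum>n<N. ind (v - u) n p + ind (v - u) n (P+p))"
    unfolding Phi0_def by (rule sum.cong) (auto simp: ind_def)
  then show ?thesis using assms by (simp add: sum_two_cols)
qed

lemma Phi1_ind:
  assumes "p < P"
  shows "Phi1 N P (ind u) (ind v) p = card ((v \<inter> u) \<inter> ({..<N} \<times> {p, P+p}))"
proof -
  have "Phi1 N P (ind u) (ind v) p = (\<Sum>n<N. ind (v \<inter> u) n p + ind (v \<inter> u) n (P+p))"
    unfolding Phi1_def by (rule sum.cong) (auto simp: ind_def)
  then show ?thesis using assms by (simp add: sum_two_cols)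
qed

lemma A1_image:
  "A1 N P a = (\<lambda>(u,v). (ind u, ind v)) `
     {(u,v). u \<subseteq> {..<N} \<times> {..<2*P} \<and> v \<subseteq> {..<N} \<times> {..<2*P} \<and>
        (\<forall>n<N. card (u \<inter> ({n} \<times> {..<2*P})) = a n)}"
proof (intro equalityI subsetI)
  fix x assume x: "x \<in> A1 N P a"
  obtain A X where AX: "x = (A, X)" by (cases x)
  have adm: "(A,X) \<in> admixed_arrays N P" and rt: "\<forall>n<N. row_tally P A n = a n"
    using x AX unfolding A1_def by auto
  note r = admixed_repr[OF adm]
  show "x \<in> (\<lambda>(u,v). (ind u, ind v)) ` {(u,v). u \<subseteq> {..<N} \<times> {..<2*P} \<and> v \<subseteq> {..<N} \<times> {..<2*P} \<and>
        (\<forall>n<N. card (u \<inter> ({n} \<times> {..<2*P})) = a n)}"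
    apply (rule image_eqI[where x="({c. A (fst c) (snd c) = 1}, {c. X (fst c) (snd c) = 1})"])
    using r rt AX row_tally_ind[of P "{c. A (fst c) (snd c) = 1}"] by auto
next
  fix x assume "x \<in> (\<lambda>(u,v). (ind u, ind v)) ` {(u,v). u \<subseteq> {..<N} \<times> {..<2*P} \<and> v \<subseteq> {..<N} \<times> {..<2*P} \<and>
        (\<forall>n<N. card (u \<inter> ({n} \<times> {..<2*P})) = a n)}"
  then show "x \<in> A1 N P a" unfolding A1_def using ind_admixed by (auto simp: row_tally_ind)
qed

lemma A2_image:
  "A2 N P f0 f1 = (\<lambda>(u,v). (ind u, ind v)) `
     {(u,v). u \<subseteq> {..<N} \<times> {..<2*P} \<and> v \<subseteq> {..<N} \<times> {..<2*P} \<and>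
        (\<forall>p<P. card ((v - u) \<inter> ({..<N} \<times> {p, P+p})) = f0 p \<and> card ((v \<inter> u) \<inter> ({..<N} \<times> {p, P+p})) = f1 p)}"
proof (intro equalityI subsetI)
  fix x assume x: "x \<in> A2 N P f0 f1"
  obtain A X where AX: "x = (A, X)" by (cases x)
  have adm: "(A,X) \<in> admixed_arrays N P" and rt: "\<forall>p<P. Phi0 N P A X p = f0 p \<and> Phi1 N P A X p = f1 p"
    using x AX unfolding A2_def by auto
  note r = admixed_repr[OF adm]
  show "x \<in> (\<lambda>(u,v). (ind u, ind v)) ` {(u,v). u \<subseteq> {..<N} \<times> {..<2*P} \<and> v \<subseteq> {..<N} \<times> {..<2*P} \<and>
        (\<forall>p<P. card ((v - u) \<inter> ({..<N} \<times> {p, P+p})) = f0 p \<and> card ((v \<inter> u) \<inter> ({..<N} \<times> {p, P+p})) = f1 p)}"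
    apply (rule image_eqI[where x="({c. A (fst c) (snd c) = 1}, {c. X (fst c) (snd c) = 1})"])
    using r rt AX Phi0_ind[of _ P N "{c. A (fst c) (snd c) = 1}" "{c. X (fst c) (snd c) = 1}"]
      Phi1_ind[of _ P N "{c. A (fst c) (snd c) = 1}" "{c. X (fst c) (snd c) = 1}"] by auto
next
  fix x assume "x \<in> (\<lambda>(u,v). (ind u, ind v)) ` {(u,v). u \<subseteq> {..<N} \<times> {..<2*P} \<and> v \<subseteq> {..<N} \<times> {..<2*P} \<and>
        (\<forall>p<P. card ((v - u) \<inter> ({..<N} \<times> {p, P+p})) = f0 p \<and> card ((v \<inter> u) \<inter> ({..<N} \<times> {p, P+p})) = f1 p)}"
  then show "x \<in> A2 N P f0 f1" unfolding A2_def using ind_admixed by (auto simp: Phi0_ind Phi1_ind)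
qed

lemma inj_pair_ind: "inj_on (\<lambda>(u,v). (ind u, ind v)) S"
  by (auto simp: inj_on_def dest: ind_inj)



lemma card_A1: "card (A1 N P (\<lambda>_. a)) = ((2*P choose a) * 2^(2*P))^N"
proof -
  let ?Loc = "\<lambda>n::nat. {n} \<times> {..<2*P}"
  have U: "\<Union>(?Loc ` {..<N}) = {..<N} \<times> {..<2*P}" by auto
  have "card (A1 N P (\<lambda>_. a)) = card {(u,v). u \<subseteq> {..<N} \<times> {..<2*P} \<and> v \<subseteq> {..<N} \<times> {..<2*P} \<and>
        (\<forall>n<N. card (u \<inter> ({n} \<times> {..<2*P})) = a)}"
    unfolding A1_image by (rule card_image[OF inj_pair_ind])
  also have "\<dots> = card {(u,v). u \<subseteq> \<Union>(?Loc ` {..<N}) \<and> v \<subseteq> \<Union>(?Loc ` {..<N}) \<and>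
        (\<forall>n\<in>{..<N}. (\<lambda>n u v. card u = a) n (u \<inter> ?Loc n) (v \<inter> ?Loc n))}"
    unfolding U by (simp add: Ball_def)
  also have "\<dots> = (\<Prod>n\<in>{..<N}. card {(u,v). u \<subseteq> ?Loc n \<and> v \<subseteq> ?Loc n \<and> card u = a})"
    by (rule card_decomp) (auto simp: disjoint_family_on_def)
  also have "\<dots> = (\<Prod>n\<in>{..<N}. (2*P choose a) * 2^(2*P))"
  proof (rule prod.cong)
    fix n
    have "{(u,v). u \<subseteq> ?Loc n \<and> v \<subseteq> ?Loc n \<and> card u = a} = {u. u \<subseteq> ?Loc n \<and> card u = a} \<times> Pow (?Loc n)"
      by auto
    then show "card {(u,v). u \<subseteq> ?Loc n \<and> v \<subseteq> ?Loc n \<and> card u = a} = (2*P choose a) * 2^(2*P)"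
      by (simp add: card_cartesian_product n_subsets card_Pow card_cartesian_product_singleton)
  qed simp
  finally show ?thesis by simp
qed

lemma card_A2:
  assumes "\<phi>0 + \<phi>1 \<le> 2*N"
  shows "card (A2 N P (\<lambda>_. \<phi>0) (\<lambda>_. \<phi>1)) = ((2*N choose (\<phi>0+\<phi>1)) * ((\<phi>0+\<phi>1) choose \<phi>1) * 2^(2*N - (\<phi>0+\<phi>1)))^P"
proof -
  let ?Loc = "\<lambda>p::nat. {..<N} \<times> {p, P+p}"
  have U: "\<Union>(?Loc ` {..<P}) = {..<N} \<times> {..<2*P}"
  proof (intro equalityI subsetI)
    fix c assume "c \<in> {..<N} \<times> {..<2*P}"
    then obtain n j where c: "c = (n,j)" "n < N" "j < 2*P" by auto
    show "c \<in> \<Union>(?Loc ` {..<P})"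
    proof (cases "j < P")
      case True then show ?thesis using c by auto
    next
      case False then show ?thesis using c by (auto intro!: bexI[where x="j - P"])
    qed
  qed auto
  have dj: "disjoint_family_on ?Loc {..<P}"
    by (auto simp: disjoint_family_on_def)
  have "card (A2 N P (\<lambda>_. \<phi>0) (\<lambda>_. \<phi>1)) = card {(u,v). u \<subseteq> {..<N} \<times> {..<2*P} \<and> v \<subseteq> {..<N} \<times> {..<2*P} \<and>
        (\<forall>p<P. card ((v - u) \<inter> ?Loc p) = \<phi>0 \<and> card ((v \<inter> u) \<inter> ?Loc p) = \<phi>1)}"
    unfolding A2_image by (rule card_image[OF inj_pair_ind])
  also have "\<dots> = card {(u,v). u \<subseteq> \<Union>(?Loc ` {..<P}) \<and> v \<subseteq> \<Union>(?Loc ` {..<P}) \<and>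
        (\<forall>p\<in>{..<P}. (\<lambda>p u v. card (v - u) = \<phi>0 \<and> card (v \<inter> u) = \<phi>1) p (u \<inter> ?Loc p) (v \<inter> ?Loc p))}"
  proof -
    have "\<And>u v p. (v \<inter> ?Loc p) - (u \<inter> ?Loc p) = (v - u) \<inter> ?Loc p"
         "\<And>u v p. (v \<inter> ?Loc p) \<inter> (u \<inter> ?Loc p) = (v \<inter> u) \<inter> ?Loc p" by auto
    then show ?thesis unfolding U by (simp add: Ball_def)
  qed
  also have "\<dots> = (\<Prod>p\<in>{..<P}. card {(u,v). u \<subseteq> ?Loc p \<and> v \<subseteq> ?Loc p \<and> card (v - u) = \<phi>0 \<and> card (v \<inter> u) = \<phi>1})"
    by (rule card_decomp) (use dj in auto)
  also have "\<dots> = (\<Prod>p\<in>{..<P}. (2*N choose (\<phi>0+\<phi>1)) * ((\<phi>0+\<phi>1) choose \<phi>1) * 2^(2*N - (\<phi>0+\<phi>1)))"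
  proof (rule prod.cong)
    fix p assume "p \<in> {..<P}"
    then have "p \<noteq> P + p" by auto
    then have "card (?Loc p) = 2*N" by (simp add: card_cartesian_product)
    then show "card {(u,v). u \<subseteq> ?Loc p \<and> v \<subseteq> ?Loc p \<and> card (v - u) = \<phi>0 \<and> card (v \<inter> u) = \<phi>1}
       = (2*N choose (\<phi>0+\<phi>1)) * ((\<phi>0+\<phi>1) choose \<phi>1) * 2^(2*N - (\<phi>0+\<phi>1))"
      using count_locus[of "?Loc p" "2*N" \<phi>0 \<phi>1] assms by simp
  qed simp
  finally show ?thesis by simp
qed



lemma pos_mult_iff: "(0::real) < c \<Longrightarrow> 0 < e * c \<longleftrightarrow> 0 < e"
  by (simp add: zero_less_mult_iff)

lemma part1_core:
  fixes N P a \<phi>0 \<phi>1 :: nat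
  assumes "0 < N" "0 < P" "a \<le> 2*P" "\<phi>0 + \<phi>1 \<le> 2*N"
  shows "card (A2 N P (\<lambda>_. \<phi>0) (\<lambda>_. \<phi>1)) < card (A1 N P (\<lambda>_. a)) \<longleftrightarrow>
    1 / (2 * real P) * log 2 (real ((2*P) choose a))
     - 1 / (2 * real N) * (log 2 (real ((2*N) choose (\<phi>0+\<phi>1))) + log 2 (real ((\<phi>0+\<phi>1) choose \<phi>1)))
     + (real \<phi>0 + real \<phi>1) / (2 * real N) > 0"
proof -
  define s where "s = \<phi>0 + \<phi>1"
  define c1 where "c1 = (2*P choose a)"
  define c2 where "c2 = (2*N choose s)"
  define c3 where "c3 = (s choose \<phi>1)"
  have pos: "c1 > 0" "c2 > 0" "c3 > 0" using assms unfolding c1_def c2_def c3_def s_def by auto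
  define x where "x = log 2 (real c1)"
  define y where "y = log 2 (real c2)"
  define z where "z = log 2 (real c3)"
  have cA1: "card (A1 N P (\<lambda>_. a)) = (c1 * 2^(2*P))^N" unfolding c1_def by (rule card_A1)
  have cA2: "card (A2 N P (\<lambda>_. \<phi>0) (\<lambda>_. \<phi>1)) = (c2 * c3 * 2^(2*N - s))^P"
    unfolding c2_def c3_def s_def by (rule card_A2) (use assms in auto)
  have l1: "log 2 (real ((c1 * 2^(2*P))^N)) = real N * (x + 2 * real P)"
    using pos by (simp add: x_def log_nat_power log_mult)
  have l2: "log 2 (real ((c2 * c3 * 2^(2*N - s))^P)) = real P * (y + z + (2 * real N - real s))"
    using pos assms by (simp add: y_def z_def s_def log_nat_power log_mult of_nat_diff)
  have "card (A2 N P (\<lambda>_. \<phi>0) (\<lambda>_. \<phi>1)) < card (A1 N P (\<lambda>_. a)) \<longleftrightarrow>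
        real ((c2 * c3 * 2^(2*N - s))^P) < real ((c1 * 2^(2*P))^N)"
    unfolding cA1 cA2 by linarith
  also have "\<dots> \<longleftrightarrow> log 2 (real ((c2 * c3 * 2^(2*N - s))^P)) < log 2 (real ((c1 * 2^(2*P))^N))"
    using pos by (subst log_less_cancel_iff) auto
  also have "\<dots> \<longleftrightarrow> real P * (y + z + (2 * real N - real s)) < real N * (x + 2 * real P)"
    unfolding l1 l2 ..
  also have "\<dots> \<longleftrightarrow> 0 < (1 / (2 * real P) * x - 1 / (2 * real N) * (y + z) + real s / (2 * real N)) * (2 * real N * real P)"
  proof -
    have eq: "(1 / (2 * real P) * x - 1 / (2 * real N) * (y + z) + real s / (2 * real N)) * (2 * real N * real P)
      = real N * x - real P * (y + z) + real P * real s" (is "_ = ?r")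
      using assms by (simp add: field_simps)
    show ?thesis by (subst eq) (simp add: algebra_simps)
  qed
  also have "\<dots> \<longleftrightarrow> 0 < 1 / (2 * real P) * x - 1 / (2 * real N) * (y + z) + real s / (2 * real N)"
  proof -
    have c: "0 < 2 * real N * real P" using assms by simp
    show ?thesis using pos_mult_iff[OF c] by blast
  qed
  finally show ?thesis unfolding x_def y_def z_def c1_def c2_def c3_def s_def by simp
qed



lemma F1: "real n * ln (real n + 1) \<le> real n * ln (real n) + 1"
proof (cases "n = 0")
  case False
  then have pos: "0 < real n" by simp
  have "ln (real n + 1) - ln (real n) = ln ((real n + 1) / real n)"
    using pos by (simp add: ln_div)
  also have "\<dots> \<le> (real n + 1) / real n - 1" using pos by (intro ln_le_minus_one) simp
  also have "\<dots> = 1 / real n" using pos by (simp add: field_simps)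
  finally have "real n * (ln (real n + 1) - ln (real n)) \<le> real n * (1 / real n)"
    using pos by (intro mult_left_mono) auto
  then show ?thesis using pos by (simp add: algebra_simps)
qed simp

lemma F2: "1 + (real n + 2) * ln (real n + 1) \<le> (real n + 2) * ln (real n + 2)"
proof -
  have pos: "0 < real n + 1" "0 < real n + 2" by simp_all
  have "ln (real n + 1) - ln (real n + 2) = ln ((real n + 1) / (real n + 2))"
    using pos by (simp add: ln_div)
  also have "\<dots> \<le> (real n + 1) / (real n + 2) - 1" using pos by (intro ln_le_minus_one) simp
  also have "\<dots> = - 1 / (real n + 2)" using pos by (simp add: field_simps)
  finally have "(real n + 2) * (ln (real n + 1) - ln (real n + 2)) \<le> (real n + 2) * (- 1 / (real n + 2))"
    using pos by (intro mult_left_mono) auto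
  then show ?thesis using pos by (simp add: algebra_simps)
qed

lemma ln_fact_Suc: "ln (fact (Suc n) :: real) = ln (real n + 1) + ln (fact n)"
  by (simp add: ln_mult add.commute)

lemma lnfact_lower: "real n * ln (real n) - real n \<le> ln (fact n :: real)"
proof (induction n)
  case (Suc n)
  have "real (Suc n) * ln (real (Suc n)) - real (Suc n) = (real n + 1) * ln (real n + 1) - real n - 1"
    by (simp add: add.commute)
  also have "\<dots> \<le> ln (real n + 1) + (real n * ln (real n) - real n)"
    using F1[of n] by (simp add: algebra_simps)
  also have "\<dots> \<le> ln (real n + 1) + ln (fact n)" using Suc by simp
  finally show ?case by (simp only: ln_fact_Suc)
qed simp

lemma lnfact_upper: "ln (fact n :: real) \<le> (real n + 1) * ln (real n + 1) - real n"
proof (induction n)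
  case (Suc n)
  have "ln (fact (Suc n) :: real) = ln (real n + 1) + ln (fact n)" by (rule ln_fact_Suc)
  also have "\<dots> \<le> ln (real n + 1) + ((real n + 1) * ln (real n + 1) - real n)" using Suc by simp
  also have "\<dots> = (real n + 2) * ln (real n + 1) - real n" by (simp add: algebra_simps)
  also have "\<dots> \<le> (real n + 2) * ln (real n + 2) - real n - 1" using F2[of n] by simp
  also have "\<dots> = (real (Suc n) + 1) * ln (real (Suc n) + 1) - real (Suc n)" by (simp add: add.commute)
  finally show ?case .
qed simp

definition ferr :: "nat \<Rightarrow> real" where
  "ferr m = ln (fact m) - (real m * ln (real m) - real m)"

lemma ferr_bounds: "0 \<le> ferr m" "ferr m \<le> ln (real m + 1) + 1"
proof -
  show "0 \<le> ferr m" using lnfact_lower[of m] unfolding ferr_def by simp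
  have "ln (fact m :: real) \<le> real m * ln (real m) - real m + ln (real m + 1) + 1"
    using lnfact_upper[of m] F1[of m] by (simp add: algebra_simps)
  then show "ferr m \<le> ln (real m + 1) + 1" unfolding ferr_def by simp
qed

lemma ferr_mono_bound: "m \<le> n \<Longrightarrow> ferr m \<le> ln (real n + 1) + 1"
  using ferr_bounds(2)[of m] by (smt (verit) ln_le_cancel_iff of_nat_le_iff of_nat_0_le_iff)

lemma lnfact_eq: "ln (fact m :: real) = real m * ln (real m) - real m + ferr m"
  unfolding ferr_def by simp

lemma ln_choose: "k \<le> n \<Longrightarrow> ln (real (n choose k)) = ln (fact n) - ln (fact k) - ln (fact (n - k))"
  by (simp add: binomial_fact ln_div ln_mult)

lemma xlnx_split: "0 < n \<Longrightarrow> real k * ln (real k) = real k * ln (real k / real n) + real k * ln (real n)"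
  by (cases "k = 0") (simp_all add: ln_div algebra_simps)

definition he :: "real \<Rightarrow> real" where
  "he p = - p * ln p - (1 - p) * ln (1 - p)"

definition he3 :: "real \<Rightarrow> real \<Rightarrow> real" where
  "he3 x y = - x * ln x - y * ln y - (1 - x - y) * ln (1 - x - y)"

lemma err_lim:
  assumes "filterlim n at_top F"
  shows "((\<lambda>x. (ln (real (n x) + 1) + 1) / real (n x)) \<longlongrightarrow> 0) F"
proof -
  have "((\<lambda>m::nat. (ln (real m + 1) + 1) / real m) \<longlongrightarrow> 0) at_top" by real_asymp
  from filterlim_compose[OF this assms] show ?thesis by (simp add: o_def)
qed

lemma binom_pointwise:
  assumes "0 < n" "k \<le> n"
  shows "ln (real (n choose k)) / real n = he (real k / real n) + (ferr n - ferr k - ferr (n-k)) / real n"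
proof -
  have pn: "0 < real n" using assms by simp
  have h1: "real k * ln (real k) = real k * ln (real k / real n) + real k * ln (real n)"
    using xlnx_split[OF assms(1)] .
  have h2: "real (n-k) * ln (real (n-k)) = real (n-k) * ln (real (n-k) / real n) + real (n-k) * ln (real n)"
    using xlnx_split[OF assms(1)] .
  have h3: "1 - real k / real n = real (n-k) / real n" using assms pn by (simp add: of_nat_diff field_simps)
  have h4: "he (real k / real n) * real n = - real k * ln (real k / real n) - real (n-k) * ln (real (n-k) / real n)"
    unfolding he_def h3 using pn by (simp add: field_simps)
  have "ln (real (n choose k)) = real n * ln (real n) - real n + ferr n - (real k * ln (real k) - real k + ferr k)
      - (real (n-k) * ln (real (n-k)) - real (n-k) + ferr (n-k))"
    using assms(2) by (simp add: ln_choose lnfact_eq)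
  also have "\<dots> = he (real k / real n) * real n + (ferr n - ferr k - ferr (n-k))"
    unfolding h4 h1 h2 using assms(2) by (simp add: of_nat_diff algebra_simps)
  finally show ?thesis using pn by (simp add: field_simps)
qed

lemma tri_pointwise:
  assumes "0 < n" "k0 + k1 \<le> n"
  shows "(ln (real (n choose (k0+k1))) + ln (real ((k0+k1) choose k1))) / real n
     = he3 (real k0 / real n) (real k1 / real n) + (ferr n - ferr k0 - ferr k1 - ferr (n - (k0+k1))) / real n"
proof -
  define r where "r = n - (k0 + k1)"
  have pn: "0 < real n" using assms by simp
  have rr: "real r = real n - real k0 - real k1" using assms by (simp add: r_def of_nat_diff)
  have h0: "real k0 * ln (real k0) = real k0 * ln (real k0 / real n) + real k0 * ln (real n)"
    using xlnx_split[OF assms(1)] .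
  have h1: "real k1 * ln (real k1) = real k1 * ln (real k1 / real n) + real k1 * ln (real n)"
    using xlnx_split[OF assms(1)] .
  have h2: "real r * ln (real r) = real r * ln (real r / real n) + real r * ln (real n)"
    using xlnx_split[OF assms(1)] .
  have h3: "1 - real k0 / real n - real k1 / real n = real r / real n" using pn by (simp add: rr field_simps)
  have h4: "he3 (real k0 / real n) (real k1 / real n) * real n = - real k0 * ln (real k0 / real n)
     - real k1 * ln (real k1 / real n) - real r * ln (real r / real n)"
    unfolding he3_def h3 using pn by (simp add: field_simps)
  have "ln (real (n choose (k0+k1))) + ln (real ((k0+k1) choose k1))
     = ln (fact n) - ln (fact k0) - ln (fact k1) - ln (fact r)"
    using assms(2) by (simp add: ln_choose r_def)
  also have "\<dots> = real n * ln (real n) - real n + ferr n - (real k0 * ln (real k0) - real k0 + ferr k0)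
      - (real k1 * ln (real k1) - real k1 + ferr k1) - (real r * ln (real r) - real r + ferr r)"
    by (simp add: lnfact_eq)
  also have "\<dots> = he3 (real k0 / real n) (real k1 / real n) * real n + (ferr n - ferr k0 - ferr k1 - ferr r)"
  proof -
    have nn: "real n = real k0 + real k1 + real r" using rr by simp
    have lnn: "real n * ln (real n) = real k0 * ln (real n) + real k1 * ln (real n) + real r * ln (real n)"
      by (subst (1) nn) (simp add: algebra_simps)
    show ?thesis unfolding h4 h0 h1 h2 using lnn nn by (simp add: algebra_simps)
  qed
  finally show ?thesis using pn by (simp add: field_simps r_def)
qed

lemma he_tendsto:
  assumes "(r \<longlongrightarrow> p) F" "0 < p" "p < 1"
  shows "((\<lambda>x. he (r x)) \<longlongrightarrow> he p) F"
  unfolding he_def by (intro tendsto_intros assms) (use assms in auto)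

lemma he3_tendsto:
  assumes "(r0 \<longlongrightarrow> p0) F" "(r1 \<longlongrightarrow> p1) F" "0 < p0" "0 < p1" "p0 + p1 < 1"
  shows "((\<lambda>x. he3 (r0 x) (r1 x)) \<longlongrightarrow> he3 p0 p1) F"
  unfolding he3_def by (intro tendsto_intros assms) (use assms in auto)

lemma abs_bnd: "0 \<le> (a::real) \<Longrightarrow> a \<le> B \<Longrightarrow> 0 \<le> b \<Longrightarrow> b \<le> B \<Longrightarrow> 0 \<le> c \<Longrightarrow> c \<le> B
   \<Longrightarrow> \<bar>a - b - c\<bar> \<le> 2 * B"
  by linarith

lemma abs_bnd4: "0 \<le> (a::real) \<Longrightarrow> a \<le> B \<Longrightarrow> 0 \<le> b \<Longrightarrow> b \<le> B \<Longrightarrow> 0 \<le> c \<Longrightarrow> c \<le> B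
   \<Longrightarrow> 0 \<le> d \<Longrightarrow> d \<le> B \<Longrightarrow> \<bar>a - b - c - d\<bar> \<le> 3 * B"
  by linarith

lemma binom_lim:
  fixes n k :: "'x \<Rightarrow> nat"
  assumes n: "filterlim n at_top F" and ev: "eventually (\<lambda>x. k x \<le> n x) F"
    and lim: "((\<lambda>x. real (k x) / real (n x)) \<longlongrightarrow> p) F" and p: "0 < p" "p < 1"
  shows "((\<lambda>x. ln (real (n x choose k x)) / real (n x)) \<longlongrightarrow> he p) F"
proof -
  have evn: "eventually (\<lambda>x. 0 < n x) F"
    using n by (simp add: filterlim_at_top) (metis (mono_tags) eventually_mono Suc_le_eq)
  have l1: "((\<lambda>x. he (real (k x) / real (n x))) \<longlongrightarrow> he p) F"
    using he_tendsto[OF lim p] .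
  have l2: "((\<lambda>x. (ferr (n x) - ferr (k x) - ferr (n x - k x)) / real (n x)) \<longlongrightarrow> 0) F"
  proof (rule Lim_null_comparison)
    show "eventually (\<lambda>x. norm ((ferr (n x) - ferr (k x) - ferr (n x - k x)) / real (n x))
       \<le> 2 * ((ln (real (n x) + 1) + 1) / real (n x))) F"
      using evn ev
    proof eventually_elim
      case (elim x)
      have b: "0 \<le> ferr (n x)" "0 \<le> ferr (k x)" "0 \<le> ferr (n x - k x)"
        "ferr (n x) \<le> ln (real (n x) + 1) + 1" "ferr (k x) \<le> ln (real (n x) + 1) + 1"
        "ferr (n x - k x) \<le> ln (real (n x) + 1) + 1"
        using ferr_bounds ferr_mono_bound elim by auto
      have "\<bar>ferr (n x) - ferr (k x) - ferr (n x - k x)\<bar> \<le> 2 * (ln (real (n x) + 1) + 1)"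
        using b by (intro abs_bnd) auto
      then show ?case using elim by (simp add: field_simps)
    qed
    show "((\<lambda>x. 2 * ((ln (real (n x) + 1) + 1) / real (n x))) \<longlongrightarrow> 0) F"
      using tendsto_mult_right_zero[OF err_lim[OF n], of 2] by simp
  qed
  have "((\<lambda>x. he (real (k x) / real (n x)) + (ferr (n x) - ferr (k x) - ferr (n x - k x)) / real (n x)) \<longlongrightarrow> he p) F"
    using tendsto_add[OF l1 l2] by simp
  then show ?thesis
    by (rule Lim_transform_eventually) (use evn ev in \<open>eventually_elim, simp add: binom_pointwise\<close>)
qed

lemma tri_lim:
  fixes n k0 k1 :: "'x \<Rightarrow> nat"
  assumes n: "filterlim n at_top F" and ev: "eventually (\<lambda>x. k0 x + k1 x \<le> n x) F"
    and lim0: "((\<lambda>x. real (k0 x) / real (n x)) \<longlongrightarrow> p0) F"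
    and lim1: "((\<lambda>x. real (k1 x) / real (n x)) \<longlongrightarrow> p1) F"
    and p: "0 < p0" "0 < p1" "p0 + p1 < 1"
  shows "((\<lambda>x. (ln (real (n x choose (k0 x + k1 x))) + ln (real ((k0 x + k1 x) choose k1 x))) / real (n x))
           \<longlongrightarrow> he3 p0 p1) F"
proof -
  have evn: "eventually (\<lambda>x. 0 < n x) F"
    using n by (simp add: filterlim_at_top) (metis (mono_tags) eventually_mono Suc_le_eq)
  have l1: "((\<lambda>x. he3 (real (k0 x) / real (n x)) (real (k1 x) / real (n x))) \<longlongrightarrow> he3 p0 p1) F"
    using he3_tendsto[OF lim0 lim1 p] .
  have l2: "((\<lambda>x. (ferr (n x) - ferr (k0 x) - ferr (k1 x) - ferr (n x - (k0 x + k1 x))) / real (n x)) \<longlongrightarrow> 0) F"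
  proof (rule Lim_null_comparison)
    show "eventually (\<lambda>x. norm ((ferr (n x) - ferr (k0 x) - ferr (k1 x) - ferr (n x - (k0 x + k1 x))) / real (n x))
       \<le> 3 * ((ln (real (n x) + 1) + 1) / real (n x))) F"
      using evn ev
    proof eventually_elim
      case (elim x)
      have b: "0 \<le> ferr (n x)" "0 \<le> ferr (k0 x)" "0 \<le> ferr (k1 x)" "0 \<le> ferr (n x - (k0 x + k1 x))"
        "ferr (n x) \<le> ln (real (n x) + 1) + 1" "ferr (k0 x) \<le> ln (real (n x) + 1) + 1"
        "ferr (k1 x) \<le> ln (real (n x) + 1) + 1"
        "ferr (n x - (k0 x + k1 x)) \<le> ln (real (n x) + 1) + 1"
        using ferr_bounds ferr_mono_bound elim by auto
      have "\<bar>ferr (n x) - ferr (k0 x) - ferr (k1 x) - ferr (n x - (k0 x + k1 x))\<bar> \<le> 3 * (ln (real (n x) + 1) + 1)"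
        using b by (intro abs_bnd4) auto
      then show ?case using elim by (simp add: field_simps)
    qed
    show "((\<lambda>x. 3 * ((ln (real (n x) + 1) + 1) / real (n x))) \<longlongrightarrow> 0) F"
      using tendsto_mult_right_zero[OF err_lim[OF n], of 3] by simp
  qed
  have "((\<lambda>x. he3 (real (k0 x) / real (n x)) (real (k1 x) / real (n x)) + (ferr (n x) - ferr (k0 x) - ferr (k1 x) - ferr (n x - (k0 x + k1 x))) / real (n x)) \<longlongrightarrow> he3 p0 p1) F"
    using tendsto_add[OF l1 l2] by simp
  then show ?thesis
    by (rule Lim_transform_eventually) (use evn ev in \<open>eventually_elim, simp add: tri_pointwise\<close>)
qed



lemma part1_full:
  fixes N P a \<phi>0 \<phi>1 :: nat
  assumes "0 < N" "0 < P" "a \<le> 2*P" "\<phi>0 + \<phi>1 \<le> 2*N"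
  shows "(let abar = real a / (2 * real P); f0 = real \<phi>0 / (2 * real N); f1 = real \<phi>1 / (2 * real N) in
       card (A2 N P (\<lambda>_. \<phi>0) (\<lambda>_. \<phi>1)) < card (A1 N P (\<lambda>_. a)) \<longleftrightarrow>
         1 / (2 * real P) * log 2 (real ((2 * P) choose nat (round (2 * real P * abar))))
         - 1 / (2 * real N) * (log 2 (real ((2 * N) choose nat (round (2 * real N * (f0 + f1)))))
                              + log 2 (real (nat (round (2 * real N * (f0 + f1))) choose nat (round (2 * real N * f1)))))
         + (f0 + f1) > 0)"
proof -
  have r1: "nat (round (2 * real P * (real a / (2 * real P)))) = a" using assms by simp
  have r4: "real \<phi>0 / (2 * real N) + real \<phi>1 / (2 * real N) = (real \<phi>0 + real \<phi>1) / (2 * real N)"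
    by (simp add: add_divide_distrib)
  have r2: "nat (round (2 * real N * ((real \<phi>0 + real \<phi>1) / (2 * real N)))) = \<phi>0 + \<phi>1"
  proof -
    have "2 * real N * ((real \<phi>0 + real \<phi>1) / (2 * real N)) = real (\<phi>0 + \<phi>1)" using assms by simp
    then show ?thesis by (metis nat_int round_of_nat)
  qed
  have r3: "nat (round (2 * real N * (real \<phi>1 / (2 * real N)))) = \<phi>1" using assms by simp
  show ?thesis unfolding Let_def r4 r1 r2 r3 using part1_core[OF assms] by simp
qed

lemma H2: "0 < x \<Longrightarrow> x < 1 \<Longrightarrow> H [x, 1 - x] = he x / ln 2"
  by (simp add: H_def he_def log_def ln_div field_simps)

lemma H3: "0 < x \<Longrightarrow> 0 < y \<Longrightarrow> x + y < 1 \<Longrightarrow> H [x, y, 1 - x - y] = he3 x y / ln 2"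
  by (simp add: H_def he3_def log_def ln_div field_simps)

lemma part2:
  fixes a \<phi>0 \<phi>1 :: "nat \<Rightarrow> nat \<Rightarrow> nat" and ainf f0inf f1inf :: real
  assumes hyp: "\<forall>N P. 0 < N \<and> 0 < P \<longrightarrow>
          1 \<le> a N P \<and> a N P \<le> 2 * P - 1 \<and>
          1 \<le> \<phi>0 N P \<and> \<phi>0 N P \<le> 2 * N - 1 \<and> 1 \<le> \<phi>1 N P \<and> \<phi>1 N P \<le> 2 * N - 1 \<and>
          \<phi>0 N P + \<phi>1 N P < 2 * N"
    and la: "((\<lambda>(N, P). real (a N P) / (2 * real P)) \<longlongrightarrow> ainf) (at_top \<times>\<^sub>F at_top)"
    and l0: "((\<lambda>(N, P). real (\<phi>0 N P) / (2 * real N)) \<longlongrightarrow> f0inf) (at_top \<times>\<^sub>F at_top)"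
    and l1: "((\<lambda>(N, P). real (\<phi>1 N P) / (2 * real N)) \<longlongrightarrow> f1inf) (at_top \<times>\<^sub>F at_top)"
    and r: "ainf \<in> {0<..<1}" "f0inf \<in> {0<..<1}" "f1inf \<in> {0<..<1}" "f0inf + f1inf \<in> {0<..<1}"
  shows "(let \<Lambda> = H [ainf, 1 - ainf] - H [f0inf, f1inf, 1 - f0inf - f1inf] + (f0inf + f1inf) in
        (\<Lambda> > 0 \<longrightarrow> (\<forall>\<^sub>F (N, P) in at_top \<times>\<^sub>F at_top.
                        card (A2 N P (\<lambda>_. \<phi>0 N P) (\<lambda>_. \<phi>1 N P)) < card (A1 N P (\<lambda>_. a N P)))) \<and>
        (\<Lambda> < 0 \<longrightarrow> (\<forall>\<^sub>F (N, P) in at_top \<times>\<^sub>F at_top.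
                        card (A1 N P (\<lambda>_. a N P)) \<le> card (A2 N P (\<lambda>_. \<phi>0 N P) (\<lambda>_. \<phi>1 N P)))))"
proof -
  let ?F = "(at_top :: nat filter) \<times>\<^sub>F (at_top :: nat filter)"
  define \<Lambda> where "\<Lambda> = H [ainf, 1 - ainf] - H [f0inf, f1inf, 1 - f0inf - f1inf] + (f0inf + f1inf)"
  define E where "E = (\<lambda>x::nat\<times>nat. 1 / (2 * real (snd x)) * log 2 (real ((2 * snd x) choose a (fst x) (snd x)))
     - 1 / (2 * real (fst x)) * (log 2 (real ((2 * fst x) choose (\<phi>0 (fst x) (snd x) + \<phi>1 (fst x) (snd x))))
        + log 2 (real ((\<phi>0 (fst x) (snd x) + \<phi>1 (fst x) (snd x)) choose \<phi>1 (fst x) (snd x))))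
     + (real (\<phi>0 (fst x) (snd x)) + real (\<phi>1 (fst x) (snd x))) / (2 * real (fst x)))"
  have evpos: "eventually (\<lambda>x. 0 < fst x \<and> 0 < snd x) ?F"
    unfolding eventually_prod_filter
    by (rule exI[of _ "\<lambda>N. 0 < N"], rule exI[of _ "\<lambda>N. 0 < N"]) (use eventually_gt_at_top[of "0::nat"] in auto)
  have valid: "eventually (\<lambda>x. 0 < fst x \<and> 0 < snd x \<and> a (fst x) (snd x) \<le> 2 * snd x \<and>
      \<phi>0 (fst x) (snd x) + \<phi>1 (fst x) (snd x) \<le> 2 * fst x) ?F"
  proof (rule eventually_mono[OF evpos])
    fix x :: "nat \<times> nat" assume x: "0 < fst x \<and> 0 < snd x"
    then have "1 \<le> a (fst x) (snd x) \<and> a (fst x) (snd x) \<le> 2 * snd x - 1 \<and>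
          \<phi>0 (fst x) (snd x) + \<phi>1 (fst x) (snd x) < 2 * fst x" using hyp by blast
    then show "0 < fst x \<and> 0 < snd x \<and> a (fst x) (snd x) \<le> 2 * snd x \<and>
      \<phi>0 (fst x) (snd x) + \<phi>1 (fst x) (snd x) \<le> 2 * fst x" using x by linarith
  qed
  have equiv: "eventually (\<lambda>x. card (A2 (fst x) (snd x) (\<lambda>_. \<phi>0 (fst x) (snd x)) (\<lambda>_. \<phi>1 (fst x) (snd x)))
        < card (A1 (fst x) (snd x) (\<lambda>_. a (fst x) (snd x))) \<longleftrightarrow> E x > 0) ?F"
    using valid by (rule eventually_mono) (auto simp: E_def part1_core)
  have sm: "strict_mono (\<lambda>m::nat. 2 * m)" by (auto simp: strict_mono_def)
  have nP: "filterlim (\<lambda>x::nat\<times>nat. 2 * snd x) at_top ?F"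
    using filterlim_compose[OF filterlim_subseq[OF sm] filterlim_snd[where F="at_top::nat filter"]] by (simp add: o_def)
  have nN: "filterlim (\<lambda>x::nat\<times>nat. 2 * fst x) at_top ?F"
    using filterlim_compose[OF filterlim_subseq[OF sm] filterlim_fst[where G="at_top::nat filter"]] by (simp add: o_def)
  have la': "((\<lambda>x. real (a (fst x) (snd x)) / real (2 * snd x)) \<longlongrightarrow> ainf) ?F"
    using la by (simp add: split_beta')
  have l0': "((\<lambda>x. real (\<phi>0 (fst x) (snd x)) / real (2 * fst x)) \<longlongrightarrow> f0inf) ?F"
    using l0 by (simp add: split_beta')
  have l1': "((\<lambda>x. real (\<phi>1 (fst x) (snd x)) / real (2 * fst x)) \<longlongrightarrow> f1inf) ?F"
    using l1 by (simp add: split_beta')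
  have A: "((\<lambda>x. ln (real ((2 * snd x) choose a (fst x) (snd x))) / real (2 * snd x)) \<longlongrightarrow> he ainf) ?F"
    by (rule binom_lim[OF nP _ la']) (use valid r in \<open>auto elim: eventually_mono\<close>)
  have B: "((\<lambda>x. (ln (real ((2 * fst x) choose (\<phi>0 (fst x) (snd x) + \<phi>1 (fst x) (snd x))))
       + ln (real ((\<phi>0 (fst x) (snd x) + \<phi>1 (fst x) (snd x)) choose \<phi>1 (fst x) (snd x)))) / real (2 * fst x))
       \<longlongrightarrow> he3 f0inf f1inf) ?F"
    by (rule tri_lim[OF nN _ l0' l1']) (use valid r in \<open>auto elim: eventually_mono\<close>)
  have C: "((\<lambda>x. ln (real ((2 * snd x) choose a (fst x) (snd x))) / real (2 * snd x) / ln 2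
      - (ln (real ((2 * fst x) choose (\<phi>0 (fst x) (snd x) + \<phi>1 (fst x) (snd x))))
       + ln (real ((\<phi>0 (fst x) (snd x) + \<phi>1 (fst x) (snd x)) choose \<phi>1 (fst x) (snd x)))) / real (2 * fst x) / ln 2
      + (real (\<phi>0 (fst x) (snd x)) / real (2 * fst x) + real (\<phi>1 (fst x) (snd x)) / real (2 * fst x)))
      \<longlongrightarrow> he ainf / ln 2 - he3 f0inf f1inf / ln 2 + (f0inf + f1inf)) ?F"
    by (intro tendsto_intros A B l0' l1') simp_all
  have Eeq: "E x = ln (real ((2 * snd x) choose a (fst x) (snd x))) / real (2 * snd x) / ln 2
      - (ln (real ((2 * fst x) choose (\<phi>0 (fst x) (snd x) + \<phi>1 (fst x) (snd x))))
       + ln (real ((\<phi>0 (fst x) (snd x) + \<phi>1 (fst x) (snd x)) choose \<phi>1 (fst x) (snd x)))) / real (2 * fst x) / ln 2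
      + (real (\<phi>0 (fst x) (snd x)) / real (2 * fst x) + real (\<phi>1 (fst x) (snd x)) / real (2 * fst x))" for x
    unfolding E_def log_def by (simp add: field_simps) (simp add: add_divide_distrib)
  have LamEq: "\<Lambda> = he ainf / ln 2 - he3 f0inf f1inf / ln 2 + (f0inf + f1inf)"
    unfolding \<Lambda>_def using r by (simp add: H2 H3)
  have E: "(E \<longlongrightarrow> \<Lambda>) ?F" unfolding LamEq using C by (simp add: Eeq[abs_def])
  show ?thesis unfolding Let_def \<Lambda>_def[symmetric]
  proof (intro conjI impI)
    assume "\<Lambda> > 0"
    then have "eventually (\<lambda>x. E x > 0) ?F" using E order_tendstoD(1) by blast
    then show "\<forall>\<^sub>F (N, P) in ?F. card (A2 N P (\<lambda>_. \<phi>0 N P) (\<lambda>_. \<phi>1 N P)) < card (A1 N P (\<lambda>_. a N P))"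
      using equiv by eventually_elim (auto simp: case_prod_beta)
  next
    assume "\<Lambda> < 0"
    then have "eventually (\<lambda>x. E x < 0) ?F" using E order_tendstoD(2) by blast
    then show "\<forall>\<^sub>F (N, P) in ?F. card (A1 N P (\<lambda>_. a N P)) \<le> card (A2 N P (\<lambda>_. \<phi>0 N P) (\<lambda>_. \<phi>1 N P))"
      using equiv by eventually_elim (auto simp: case_prod_beta)
  qed
qed


theorem mainTheorem5:
  shows
  "(\<forall>(N::nat) (P::nat) (a::nat) (\<phi>0::nat) (\<phi>1::nat).
      0 < N \<and> 0 < P \<and> 1 \<le> a \<and> a \<le> 2 * P - 1 \<and>
      1 \<le> \<phi>0 \<and> \<phi>0 \<le> 2 * N - 1 \<and> 1 \<le> \<phi>1 \<and> \<phi>1 \<le> 2 * N - 1 \<and> \<phi>0 + \<phi>1 < 2 * N \<longrightarrow>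
      (let abar = real a / (2 * real P); f0 = real \<phi>0 / (2 * real N); f1 = real \<phi>1 / (2 * real N) in
       card (A2 N P (\<lambda>_. \<phi>0) (\<lambda>_. \<phi>1)) < card (A1 N P (\<lambda>_. a)) \<longleftrightarrow>
         1 / (2 * real P) * log 2 (real ((2 * P) choose nat (round (2 * real P * abar))))
         - 1 / (2 * real N) * (log 2 (real ((2 * N) choose nat (round (2 * real N * (f0 + f1)))))
                              + log 2 (real (nat (round (2 * real N * (f0 + f1))) choose nat (round (2 * real N * f1)))))
         + (f0 + f1) > 0))
   \<and>
   (\<forall>(a::nat \<Rightarrow> nat \<Rightarrow> nat) (\<phi>0::nat \<Rightarrow> nat \<Rightarrow> nat) (\<phi>1::nat \<Rightarrow> nat \<Rightarrow> nat) (ainf::real) (f0inf::real) (f1inf::real).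
      (\<forall>N P. 0 < N \<and> 0 < P \<longrightarrow>
          1 \<le> a N P \<and> a N P \<le> 2 * P - 1 \<and>
          1 \<le> \<phi>0 N P \<and> \<phi>0 N P \<le> 2 * N - 1 \<and> 1 \<le> \<phi>1 N P \<and> \<phi>1 N P \<le> 2 * N - 1 \<and>
          \<phi>0 N P + \<phi>1 N P < 2 * N) \<and>
      ((\<lambda>(N, P). real (a N P) / (2 * real P)) \<longlongrightarrow> ainf) (at_top \<times>\<^sub>F at_top) \<and>
      ((\<lambda>(N, P). real (\<phi>0 N P) / (2 * real N)) \<longlongrightarrow> f0inf) (at_top \<times>\<^sub>F at_top) \<and>
      ((\<lambda>(N, P). real (\<phi>1 N P) / (2 * real N)) \<longlongrightarrow> f1inf) (at_top \<times>\<^sub>F at_top) \<and>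
      ainf \<in> {0<..<1} \<and> f0inf \<in> {0<..<1} \<and> f1inf \<in> {0<..<1} \<and> f0inf + f1inf \<in> {0<..<1} \<longrightarrow>
      (let \<Lambda> = H [ainf, 1 - ainf] - H [f0inf, f1inf, 1 - f0inf - f1inf] + (f0inf + f1inf) in
        (\<Lambda> > 0 \<longrightarrow> (\<forall>\<^sub>F (N, P) in at_top \<times>\<^sub>F at_top.
                        card (A2 N P (\<lambda>_. \<phi>0 N P) (\<lambda>_. \<phi>1 N P)) < card (A1 N P (\<lambda>_. a N P)))) \<and>
        (\<Lambda> < 0 \<longrightarrow> (\<forall>\<^sub>F (N, P) in at_top \<times>\<^sub>F at_top.
                        card (A1 N P (\<lambda>_. a N P)) \<le> card (A2 N P (\<lambda>_. \<phi>0 N P) (\<lambda>_. \<phi>1 N P))))))"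
proof (rule conjI)
  show "\<forall>(N::nat) (P::nat) (a::nat) (\<phi>0::nat) (\<phi>1::nat).
      0 < N \<and> 0 < P \<and> 1 \<le> a \<and> a \<le> 2 * P - 1 \<and>
      1 \<le> \<phi>0 \<and> \<phi>0 \<le> 2 * N - 1 \<and> 1 \<le> \<phi>1 \<and> \<phi>1 \<le> 2 * N - 1 \<and> \<phi>0 + \<phi>1 < 2 * N \<longrightarrow>
      (let abar = real a / (2 * real P); f0 = real \<phi>0 / (2 * real N); f1 = real \<phi>1 / (2 * real N) in
       card (A2 N P (\<lambda>_. \<phi>0) (\<lambda>_. \<phi>1)) < card (A1 N P (\<lambda>_. a)) \<longleftrightarrow>
         1 / (2 * real P) * log 2 (real ((2 * P) choose nat (round (2 * real P * abar))))
         - 1 / (2 * real N) * (log 2 (real ((2 * N) choose nat (round (2 * real N * (f0 + f1)))))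
                              + log 2 (real (nat (round (2 * real N * (f0 + f1))) choose nat (round (2 * real N * f1)))))
         + (f0 + f1) > 0)"
  proof (intro allI impI)
    fix N P a \<phi>0 \<phi>1 :: nat
    assume h: "0 < N \<and> 0 < P \<and> 1 \<le> a \<and> a \<le> 2 * P - 1 \<and>
      1 \<le> \<phi>0 \<and> \<phi>0 \<le> 2 * N - 1 \<and> 1 \<le> \<phi>1 \<and> \<phi>1 \<le> 2 * N - 1 \<and> \<phi>0 + \<phi>1 < 2 * N"
    then have "0 < N" "0 < P" "a \<le> 2*P" "\<phi>0 + \<phi>1 \<le> 2*N" by linarith+
    then show "(let abar = real a / (2 * real P); f0 = real \<phi>0 / (2 * real N); f1 = real \<phi>1 / (2 * real N) in
       card (A2 N P (\<lambda>_. \<phi>0) (\<lambda>_. \<phi>1)) < card (A1 N P (\<lambda>_. a)) \<longleftrightarrow>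
         1 / (2 * real P) * log 2 (real ((2 * P) choose nat (round (2 * real P * abar))))
         - 1 / (2 * real N) * (log 2 (real ((2 * N) choose nat (round (2 * real N * (f0 + f1)))))
                              + log 2 (real (nat (round (2 * real N * (f0 + f1))) choose nat (round (2 * real N * f1)))))
         + (f0 + f1) > 0)" by (rule part1_full)
  qed
next
  show "\<forall>(a::nat \<Rightarrow> nat \<Rightarrow> nat) (\<phi>0::nat \<Rightarrow> nat \<Rightarrow> nat) (\<phi>1::nat \<Rightarrow> nat \<Rightarrow> nat) (ainf::real) (f0inf::real) (f1inf::real).
      (\<forall>N P. 0 < N \<and> 0 < P \<longrightarrow>
          1 \<le> a N P \<and> a N P \<le> 2 * P - 1 \<and>
          1 \<le> \<phi>0 N P \<and> \<phi>0 N P \<le> 2 * N - 1 \<and> 1 \<le> \<phi>1 N P \<and> \<phi>1 N P \<le> 2 * N - 1 \<and>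
          \<phi>0 N P + \<phi>1 N P < 2 * N) \<and>
      ((\<lambda>(N, P). real (a N P) / (2 * real P)) \<longlongrightarrow> ainf) (at_top \<times>\<^sub>F at_top) \<and>
      ((\<lambda>(N, P). real (\<phi>0 N P) / (2 * real N)) \<longlongrightarrow> f0inf) (at_top \<times>\<^sub>F at_top) \<and>
      ((\<lambda>(N, P). real (\<phi>1 N P) / (2 * real N)) \<longlongrightarrow> f1inf) (at_top \<times>\<^sub>F at_top) \<and>
      ainf \<in> {0<..<1} \<and> f0inf \<in> {0<..<1} \<and> f1inf \<in> {0<..<1} \<and> f0inf + f1inf \<in> {0<..<1} \<longrightarrow>
      (let \<Lambda> = H [ainf, 1 - ainf] - H [f0inf, f1inf, 1 - f0inf - f1inf] + (f0inf + f1inf) in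
        (\<Lambda> > 0 \<longrightarrow> (\<forall>\<^sub>F (N, P) in at_top \<times>\<^sub>F at_top.
                        card (A2 N P (\<lambda>_. \<phi>0 N P) (\<lambda>_. \<phi>1 N P)) < card (A1 N P (\<lambda>_. a N P)))) \<and>
        (\<Lambda> < 0 \<longrightarrow> (\<forall>\<^sub>F (N, P) in at_top \<times>\<^sub>F at_top.
                        card (A1 N P (\<lambda>_. a N P)) \<le> card (A2 N P (\<lambda>_. \<phi>0 N P) (\<lambda>_. \<phi>1 N P)))))"
    by (intro allI impI, elim conjE, rule part2) assumption+
qed

end
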